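(* Let $p$ be an odd prime, $q\in\mathbb{C}_p$ with $|1-q|_p<p^{-1/(p-1)}$, and let $\chi$ be a primitive Dirichlet character with conductor $p$. Then for every integer $n\ge0$, $$\frac{2}{[2]_q}E_{n,\chi,q}\equiv\sum_{a=0}^{p-1}\chi(a)(-1)^a[a]_q^n\pmod{[p]_q},$$ i.e. $\left|\frac{2}{[2]_q}E_{n,\chi,q}-\sum_{a=0}^{p-1}\chi(a)(-1)^a[a]_q^n\right|_p\le|[p]_q|_p$.
   Context: $\mathbb{C}_p$ is the completion of an algebraic closure of $\mathbb{Q}_p$, with absolute value $|\cdot|_p$ normalized by $|p|_p=1/p$. For $x\in\mathbb{Z}_p$ put $[x]_q=\frac{1-q^x}{1-q}$. For a Dirichlet character $\chi$ of odd conductor $d$, the generalized $q$-Euler numbers are $E_{n,\chi,q}=\frac{[2]_q}{2}\lim_{N\to\infty}\sum_{x=0}^{dp^N-1}\chi(x)(-1)^x[x]_q^n$; equivalently $\sum_{n\ge0}E_{n,\chi,q}\frac{t^n}{n!}=[2]_q\sum_{m\ge0}\chi(m)(-1)^m e^{[m]_qt}$. Here $d=p$. *)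

theory Defs
  imports "HOL-Computational_Algebra.Polynomial" "HOL-Number_Theory.Cong"
begin

text \<open>Since C_p is not available, we work in an arbitrary field K of characteristic 0
 equipped with an absolute value absv that makes K a complete, algebraically closed,
 non-archimedean valued field whose restriction to the rationals is the p-adic absolute
 value normalised by |p| = 1/p.  C_p is such a field.\<close>

definition p_tendsto :: "('a::field \<Rightarrow> real) \<Rightarrow> (nat \<Rightarrow> 'a) \<Rightarrow> 'a \<Rightarrow> bool" where
  "p_tendsto absv f L \<longleftrightarrow> (\<forall>\<epsilon>>0. \<exists>N. \<forall>m\<ge>N. absv (f m - L) < \<epsilon>)"

definition p_lim :: "('a::field \<Rightarrow> real) \<Rightarrow> (nat \<Rightarrow> 'a) \<Rightarrow> 'a" where
  "p_lim absv f = (THE L. p_tendsto absv f L)"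

definition Cp_like :: "nat \<Rightarrow> ('a::field_char_0 \<Rightarrow> real) \<Rightarrow> bool" where
  "Cp_like p absv \<longleftrightarrow>
     (\<forall>x. absv x \<ge> 0) \<and>
     (\<forall>x. absv x = 0 \<longleftrightarrow> x = 0) \<and>
     (\<forall>x y. absv (x * y) = absv x * absv y) \<and>
     (\<forall>x y. absv (x + y) \<le> max (absv x) (absv y)) \<and>
     absv (of_nat p) = 1 / real p \<and>
     (\<forall>f. (\<forall>\<epsilon>>0. \<exists>N. \<forall>m\<ge>N. \<forall>k\<ge>N. absv (f m - f k) < \<epsilon>)
            \<longrightarrow> (\<exists>L. p_tendsto absv f L)) \<and>
     (\<forall>P :: 'a poly. degree P > 0 \<longrightarrow> (\<exists>x. poly P x = 0))"

text \<open>q-number [x]_q = (1 - q^x)/(1 - q) for natural x, written as the geometric sum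
  (which agrees for q \<noteq> 1 and gives the limit value x for q = 1).\<close>
definition qnum :: "'a::field \<Rightarrow> nat \<Rightarrow> 'a" where
  "qnum q x = (\<Sum>i<x. q ^ i)"

definition dirichlet_char :: "(nat \<Rightarrow> 'a::field) \<Rightarrow> nat \<Rightarrow> bool" where
  "dirichlet_char \<chi> d \<longleftrightarrow> d > 0 \<and>
     (\<forall>m. \<chi> (m + d) = \<chi> m) \<and>
     (\<forall>m n. \<chi> (m * n) = \<chi> m * \<chi> n) \<and>
     \<chi> 1 = 1 \<and>
     (\<forall>m. \<chi> m = 0 \<longleftrightarrow> \<not> coprime m d)"

definition primitive_char :: "(nat \<Rightarrow> 'a::field) \<Rightarrow> nat \<Rightarrow> bool" where
  "primitive_char \<chi> d \<longleftrightarrow> dirichlet_char \<chi> d \<and>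
     (\<forall>e. e dvd d \<and> e < d \<longrightarrow>
        \<not> (\<forall>a b. coprime a d \<and> coprime b d \<and> [a = b] (mod e) \<longrightarrow> \<chi> a = \<chi> b))"

definition qEuler :: "('a::field_char_0 \<Rightarrow> real) \<Rightarrow> nat \<Rightarrow> nat \<Rightarrow> (nat \<Rightarrow> 'a) \<Rightarrow> 'a \<Rightarrow> nat \<Rightarrow> 'a" where
  "qEuler absv p d \<chi> q n = qnum q 2 / 2 *
     p_lim absv (\<lambda>N. \<Sum>x<d * p ^ N. \<chi> x * (-1) ^ x * qnum q x ^ n)"

end

theory Submission
  imports Defs "HOL-Number_Theory.Residues"
begin

locale nonarch =
  fixes absv :: "'a::field_char_0 \<Rightarrow> real"
  assumes nn: "\<And>x. absv x \<ge> 0" and zr: "\<And>x. absv x = 0 \<longleftrightarrow> x = 0"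
    and mul: "\<And>x y. absv (x*y) = absv x * absv y"
    and ultra: "\<And>x y. absv (x+y) \<le> max (absv x) (absv y)"
begin

lemma abs0[simp]: "absv 0 = 0"
  using zr by blast

lemma one: "absv 1 = 1"
proof -
  have "absv 1 = absv 1 * absv 1" using mul[of 1 1] by simp
  moreover have "absv 1 \<noteq> 0" using zr by simp
  ultimately show ?thesis by simp
qed

lemma minus: "absv (-x) = absv x"
proof -
  have "absv (-1) * absv (-1) = 1" using mul[of "-1" "-1"] one by simp
  hence "absv (-1) ^ 2 = 1" by (simp add: power2_eq_square)
  hence "absv (-1) = 1 \<or> absv (-1) = -1" using power2_eq_1_iff by blast
  hence "absv (-1) = 1" using nn[of "-1"] by linarith
  thus ?thesis using mul[of "-1" x] by simp
qed

lemma diff: "absv (x - y) \<le> max (absv x) (absv y)"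
  using ultra[of x "-y"] minus[of y] by simp

lemma comm: "absv (x - y) = absv (y - x)"
  using minus[of "x - y"] by simp

lemma pow: "absv (x ^ n) = absv x ^ n"
  by (induction n) (simp_all add: one mul)

lemma ofnat: "absv (of_nat n) \<le> 1"
proof (induction n)
  case 0 then show ?case using zr by simp
next
  case (Suc n)
  have "absv (1 + of_nat n) \<le> max (absv 1) (absv (of_nat n))" by (rule ultra)
  then show ?case using Suc one by simp
qed

lemma sum_le: "finite A \<Longrightarrow> (\<And>i. i\<in>A \<Longrightarrow> absv (f i) \<le> c) \<Longrightarrow> 0 \<le> c \<Longrightarrow> absv (sum f A) \<le> c"
proof (induction A rule: finite_induct)
  case empty then show ?case using zr by simp
next
  case (insert x F)
  have "absv (f x + sum f F) \<le> max (absv (f x)) (absv (sum f F))" by (rule ultra)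
  moreover have "absv (f x) \<le> c" using insert.prems by simp
  moreover have "absv (sum f F) \<le> c" using insert by simp
  ultimately show ?case using insert.hyps by simp
qed

lemma mult_le: "absv x \<le> c \<Longrightarrow> absv y \<le> 1 \<Longrightarrow> absv (x*y) \<le> c"
proof -
  assume a: "absv x \<le> c" "absv y \<le> 1"
  have "absv x * absv y \<le> absv x" using a(2) nn[of x] by (rule mult_left_le)
  then show ?thesis using a(1) mul[of x y] by linarith
qed

lemma mult_le': "absv x \<le> 1 \<Longrightarrow> absv y \<le> c \<Longrightarrow> absv (x*y) \<le> c"
  using mult_le[of y c x] by (simp add: mult.commute)

lemma q_le1: "absv (1 - q) < 1 \<Longrightarrow> absv q \<le> 1"
  using ultra[of 1 "-(1-q)"] one minus[of "1-q"] by simp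

lemma max_lt: "absv x < e \<Longrightarrow> absv y < e \<Longrightarrow> absv (x + y) < e"
  using ultra[of x y] by simp

end

lemma qnum_add: "qnum q (a + b) = qnum q a + q ^ a * qnum q b"
  by (induction b) (simp_all add: qnum_def algebra_simps power_add)

lemma qnum_mult: "qnum q (M * y) = qnum q M * qnum (q ^ M) y"
proof (induction y)
  case 0 then show ?case by (simp add: qnum_def)
next
  case (Suc y)
  have "qnum q (M * Suc y) = qnum q (M*y + M)" by (simp add: add.commute)
  also have "\<dots> = qnum q (M*y) + q^(M*y) * qnum q M" by (rule qnum_add)
  also have "\<dots> = qnum q M * qnum (q ^ M) (Suc y)"
    using Suc by (simp add: qnum_def algebra_simps power_mult)
  finally show ?case .
qed

lemma qnum_onem: "(1 - q) * qnum q n = 1 - q ^ n"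
  by (simp add: qnum_def one_diff_power_eq)

lemma qnum_decomp: "qnum q (a + M*y) = qnum q a + q^a * qnum q M * qnum (q^M) y"
  by (simp add: qnum_add qnum_mult mult.assoc)

lemma sum_block: "sum f {..<(n::nat) + m} = sum f {..<n} + (\<Sum>a<m. f (a + n))"
  by (induction m) (simp_all add: add.commute add.left_commute)

lemma sum_reindex: "sum f {..<(m::nat)*l} = (\<Sum>y<l. \<Sum>a<m. f (a + m*y))"
proof (induction l)
  case 0 then show ?case by simp
next
  case (Suc l)
  have "sum f {..<m * Suc l} = sum f {..<m*l + m}" by (simp add: add.commute)
  then show ?case using Suc sum_block[of f "m*l" m] by simp
qed


context nonarch begin

lemma qnum_le: "absv r \<le> 1 \<Longrightarrow> absv (qnum r y) \<le> 1"
  unfolding qnum_def by (rule sum_le) (simp_all add: pow power_le_one nn)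

lemma chi_bound:
  assumes "dirichlet_char \<chi> p" "prime p"
  shows "absv (\<chi> a) \<le> 1"
proof -
  have per: "\<chi> (m + p) = \<chi> m" for m using assms(1) unfolding dirichlet_char_def by blast
  have cm: "\<chi> (m * k) = \<chi> m * \<chi> k" for m k using assms(1) unfolding dirichlet_char_def by blast
  have c1: "\<chi> 1 = 1" using assms(1) unfolding dirichlet_char_def by blast
  have c0: "\<chi> m = 0 \<longleftrightarrow> \<not> coprime m p" for m using assms(1) unfolding dirichlet_char_def by blast
  have perk: "\<chi> (m + p*k) = \<chi> m" for m k
  proof (induction k)
    case (Suc k)
    have "m + p * Suc k = (m + p*k) + p" by simp
    then show ?case using Suc per by metis
  qed simp
  have modp: "\<chi> m = \<chi> (m mod p)" for m
    using perk[of "m mod p" "m div p"] by simp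
  have powk: "\<chi> (a^k) = \<chi> a ^ k" for k
  proof (induction k)
    case 0 then show ?case using c1 by simp
  next
    case (Suc k) then show ?case using cm[of a "a^k"] by simp
  qed
  show ?thesis
  proof (cases "coprime a p")
    case False
    then have "\<chi> a = 0" using c0 by blast
    then show ?thesis by simp
  next
    case True
    have p1: "p > 1" using assms(2) prime_gt_1_nat by blast
    have "\<not> p dvd a" using True assms(2)
      by (metis coprime_common_divisor_nat dvd_refl less_irrefl p1)
    hence "[a ^ (p - 1) = 1] (mod p)" using fermat_theorem assms(2) by blast
    hence "a ^ (p - 1) mod p = 1" using p1 unfolding cong_def by simp
    hence "\<chi> a ^ (p - 1) = 1" using modp[of "a^(p-1)"] powk c1 by simp
    hence "absv (\<chi> a) ^ (p - 1) = 1" using pow one by metis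
    moreover have "p - 1 > 0" using p1 by simp
    ultimately have "absv (\<chi> a) = 1"
      using nn power_eq_imp_eq_base[of "absv (\<chi> a)" "p-1" 1] by simp
    then show ?thesis by simp
  qed
qed

lemma alt_sum: "odd L \<Longrightarrow> (\<Sum>y<L. (-1::'a)^y) = 1"
proof -
  assume "odd L"
  then obtain k where k: "L = Suc (2*k)" by (metis oddE Suc_eq_plus1)
  have "(\<Sum>y<Suc (2*k). (-1::'a)^y) = 1" by (induction k) simp_all
  then show ?thesis using k by simp
qed

lemma block:
  assumes per: "\<And>m. \<chi> (m + M) = \<chi> m" and oddM: "odd M" and oddL: "odd L"
    and chb: "\<And>a. absv (\<chi> a) \<le> 1" and qb: "absv q \<le> 1"
  shows "absv ((\<Sum>x<M*L. \<chi> x * (-1)^x * qnum q x ^ n) - (\<Sum>x<M. \<chi> x * (-1)^x * qnum q x ^ n))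
           \<le> absv (qnum q M)"
proof -
  define g where "g x = \<chi> x * (-1)^x * qnum q x ^ n" for x
  have perk: "\<chi> (a + M*y) = \<chi> a" for a y
  proof (induction y)
    case (Suc y)
    have "a + M * Suc y = (a + M*y) + M" by simp
    then show ?case using Suc per by metis
  qed simp
  have sgn: "(-1::'a)^(a + M*y) = (-1)^a * (-1)^y" for a y
  proof -
    have "(-1::'a)^(M*y) = ((-1)^M)^y" by (simp add: power_mult)
    also have "\<dots> = (-1)^y" using oddM by simp
    finally show ?thesis by (simp add: power_add)
  qed
  have qMb: "absv (q^M) \<le> 1" using qb by (simp add: pow power_le_one nn)
  have trm: "absv (g (a + M*y) - (-1)^y * g a) \<le> absv (qnum q M)" for a y
  proof -
    define X where "X = qnum q (a + M*y)"
    define A where "A = qnum q a"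
    have XA: "X - A = q^a * qnum q M * qnum (q^M) y" unfolding X_def A_def by (simp add: qnum_decomp)
    have g1: "g (a+M*y) = \<chi> a * (-1)^a * (-1)^y * X^n" unfolding g_def X_def by (simp add: perk sgn mult.assoc)
    have g2: "g a = \<chi> a * (-1)^a * A^n" unfolding g_def A_def by simp
    have e0: "g (a + M*y) - (-1)^y * g a = (\<chi> a * (-1)^a * (-1)^y) * (X^n - A^n)"
      unfolding g1 g2 by (simp add: algebra_simps)
    have e1: "g (a + M*y) - (-1)^y * g a = (\<chi> a * (-1)^a * (-1)^y) * ((X - A) * (\<Sum>i<n. A^(n - Suc i) * X^i))"
      unfolding e0 power_diff_sumr2 ..
    have b1: "absv (\<chi> a * (-1)^a * (-1)^y) \<le> 1"
      using chb[of a] by (simp add: mul pow minus one mult_le_one nn)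
    have Xb: "absv X \<le> 1" "absv A \<le> 1" unfolding X_def A_def using qb qnum_le by auto
    have b2: "absv (\<Sum>i<n. A^(n - Suc i) * X^i) \<le> 1"
      by (rule sum_le) (simp_all add: mul pow Xb power_le_one nn mult_le_one)
    have b3: "absv (X - A) \<le> absv (qnum q M)"
    proof -
      have "absv (q^a * qnum q M) \<le> absv (qnum q M)"
        using qb by (intro mult_le') (simp_all add: pow power_le_one nn)
      then show ?thesis unfolding XA using qnum_le[OF qMb, of y] by (rule mult_le)
    qed
    have "absv ((X - A) * (\<Sum>i<n. A^(n - Suc i) * X^i)) \<le> absv (qnum q M)"
      using b2 b3 by (intro mult_le)
    from mult_le'[OF b1 this] show ?thesis unfolding e1 .
  qed
  have "(\<Sum>x<M*L. g x) - (\<Sum>x<M. g x) = (\<Sum>y<L. \<Sum>a<M. g (a + M*y)) - (\<Sum>y<L. (-1)^y) * (\<Sum>x<M. g x)"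
    using alt_sum[OF oddL] sum_reindex[of g M L] by simp
  also have "\<dots> = (\<Sum>y<L. \<Sum>a<M. g (a + M*y)) - (\<Sum>y<L. \<Sum>a<M. (-1)^y * g a)"
    by (simp only: sum_product)
  also have "\<dots> = (\<Sum>y<L. \<Sum>a<M. (g (a + M*y) - (-1)^y * g a))"
    by (simp only: sum_subtractf)
  finally have eq: "(\<Sum>x<M*L. g x) - (\<Sum>x<M. g x) = (\<Sum>y<L. \<Sum>a<M. (g (a + M*y) - (-1)^y * g a))" .
  have "absv (\<Sum>y<L. \<Sum>a<M. (g (a + M*y) - (-1)^y * g a)) \<le> absv (qnum q M)"
    by (intro sum_le) (simp_all add: trm nn)
  then show ?thesis using eq unfolding g_def by simp
qed

end


theorem mainTheorem5:
  fixes p :: nat and absv :: "'a::field_char_0 \<Rightarrow> real" and q :: 'a and \<chi> :: "nat \<Rightarrow> 'a"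
  assumes "prime p" and "odd p"
    and "Cp_like p absv"
    and "absv (1 - q) < real p powr (- 1 / (real p - 1))"
    and "primitive_char \<chi> p"
  shows "\<forall>n::nat. absv (2 / qnum q 2 * qEuler absv p p \<chi> q n
              - (\<Sum>a<p. \<chi> a * (-1) ^ a * qnum q a ^ n)) \<le> absv (qnum q p)"
proof
  fix n :: nat
  interpret nonarch absv using assms(3) unfolding Cp_like_def by unfold_locales blast+
  have absp: "absv (of_nat p) = 1 / real p" using assms(3) unfolding Cp_like_def by blast
  have compl: "\<And>f. (\<forall>\<epsilon>>0. \<exists>N. \<forall>m\<ge>N. \<forall>k\<ge>N. absv (f m - f k) < \<epsilon>) \<Longrightarrow> (\<exists>L. p_tendsto absv f L)"
    using assms(3) unfolding Cp_like_def by blast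
  have dc: "dirichlet_char \<chi> p" using assms(5) unfolding primitive_char_def by blast
  have per: "\<chi> (m + p) = \<chi> m" for m using dc unfolding dirichlet_char_def by blast
  have perk: "\<chi> (m + p*k) = \<chi> m" for m k
  proof (induction k)
    case (Suc k)
    have "m + p * Suc k = (m + p*k) + p" by simp
    then show ?case using Suc per by metis
  qed simp
  have chb: "absv (\<chi> a) \<le> 1" for a using chi_bound[OF dc assms(1)] .
  have p2: "p \<ge> 2" using assms(1) prime_ge_2_nat by blast
  have p3: "p \<ge> 3" using p2 assms(2) by (cases "p = 2") auto
  define r where "r = absv (1 - q)"
  have "real p powr (- 1 / (real p - 1)) < 1"
    using p3 by (intro powr_less_one) auto
  hence r1: "r < 1" using assms(4) unfolding r_def by linarith
  have qb: "absv q \<le> 1" using q_le1 r1 unfolding r_def by blast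
  define c where "c = max (1 / real p) r"
  have c1: "c < 1" using r1 p3 unfolding c_def by auto
  have c0: "0 < c" using p3 unfolding c_def less_max_iff_disj by simp
  have qpb: "absv (qnum q' p) \<le> c" if "absv (1 - q') \<le> r" for q'
  proof -
    have q'b: "absv q' \<le> 1" using q_le1 that r1 by fastforce
    have "qnum q' p - of_nat p = (\<Sum>i<p. q'^i - 1)" by (simp add: qnum_def sum_subtractf)
    also have "\<dots> = (\<Sum>i<p. - ((1 - q') * qnum q' i))" by (simp add: qnum_onem)
    finally have eq: "qnum q' p = of_nat p + (\<Sum>i<p. - ((1 - q') * qnum q' i))" by (simp add: algebra_simps)
    have "absv (\<Sum>i<p. - ((1 - q') * qnum q' i)) \<le> r"
    proof (rule sum_le)
      fix i
      show "absv (- ((1 - q') * qnum q' i)) \<le> r"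
        unfolding minus using mult_le[OF that qnum_le[OF q'b]] .
    qed (use nn[of "1-q'"] that in auto)
    then show ?thesis unfolding eq c_def using ultra[of "of_nat p"] absp
      by (smt (verit))
  qed
  have qppb: "absv (qnum q' (p^k)) \<le> c^k" if "absv (1 - q') \<le> r" for k q'
    using that
  proof (induction k arbitrary: q')
    case 0 then show ?case by (simp add: qnum_def one)
  next
    case (Suc k)
    have q'b: "absv q' \<le> 1" using q_le1 Suc.prems r1 by fastforce
    have "absv (1 - q'^p) = absv ((1 - q') * qnum q' p)" by (simp add: qnum_onem)
    also have "\<dots> \<le> r" using mult_le[OF Suc.prems qnum_le[OF q'b]] .
    finally have "absv (qnum (q'^p) (p^k)) \<le> c^k" using Suc.IH by blast
    moreover have "absv (qnum q' p) \<le> c" using qpb Suc.prems by blast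
    ultimately have "absv (qnum q' p) * absv (qnum (q'^p) (p^k)) \<le> c * c^k"
      using nn c0 by (intro mult_mono) auto
    then show ?case by (simp add: qnum_mult mul)
  qed
  define F where "F K = (\<Sum>x<K. \<chi> x * (-1) ^ x * qnum q x ^ n)" for K
  define S where "S N = (\<Sum>x<p * p ^ N. \<chi> x * (-1) ^ x * qnum q x ^ n)" for N
  have SF: "S N = F (p * p^N)" for N unfolding S_def F_def ..
  have D1: "absv (S N - F p) \<le> absv (qnum q p)" for N
    unfolding SF F_def using block[of \<chi> p "p^N" q n] per assms(2) chb qb by simp
  have D2: "absv (S (Suc N) - S N) \<le> c ^ Suc N" for N
  proof -
    have pM: "\<chi> (m + p^Suc N) = \<chi> m" for m using perk[of m "p^N"] by simp
    have "S (Suc N) = F (p^Suc N * p)" unfolding SF by (simp add: mult.commute)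
    moreover have "S N = F (p^Suc N)" unfolding SF by simp
    ultimately have "absv (S (Suc N) - S N) \<le> absv (qnum q (p^Suc N))"
      unfolding F_def using block[of \<chi> "p^Suc N" p q n] pM assms(2) chb qb by simp
    also have "\<dots> \<le> c ^ Suc N" using qppb[of q "Suc N"] unfolding r_def by blast
    finally show ?thesis .
  qed
  have cauchy: "absv (S m - S k) \<le> c^k" if "k \<le> m" for k m
    using that
  proof (induction m rule: dec_induct)
    case base then show ?case using c0 by simp
  next
    case (step m)
    have "absv (S (Suc m) - S k) = absv ((S (Suc m) - S m) + (S m - S k))" by simp
    also have "\<dots> \<le> max (absv (S (Suc m) - S m)) (absv (S m - S k))" by (rule ultra)
    also have "\<dots> \<le> c^k"
    proof -
      have "c ^ Suc m \<le> c ^ k" using step.hyps c0 c1 by (intro power_decreasing) auto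
      then show ?thesis using D2[of m] step.IH by simp
    qed
    finally show ?case .
  qed
  have "\<exists>L. p_tendsto absv S L"
  proof (rule compl, intro allI impI)
    fix e :: real assume e: "e > 0"
    obtain N where N: "c^N < e" using real_arch_pow_inv[OF e c1] by blast
    have "absv (S m - S k) < e" if "m \<ge> N" "k \<ge> N" for m k
    proof (cases "k \<le> m")
      case True
      have "c^k \<le> c^N" using that c0 c1 by (intro power_decreasing) auto
      then show ?thesis using cauchy[OF True] N by simp
    next
      case False
      have "c^m \<le> c^N" using that c0 c1 by (intro power_decreasing) auto
      then show ?thesis using cauchy[of m k] False N comm[of "S m" "S k"] by simp
    qed
    then show "\<exists>N. \<forall>m\<ge>N. \<forall>k\<ge>N. absv (S m - S k) < e" by blast
  qed
  then obtain L where L: "p_tendsto absv S L" by blast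
  have uniq: "L' = L" if LT: "p_tendsto absv S L'" for L'
  proof (rule ccontr)
    assume ne: "L' \<noteq> L"
    define e where "e = absv (L' - L)"
    have e: "e > 0" using ne nn[of "L' - L"] zr[of "L' - L"] unfolding e_def by simp
    obtain N1 where N1: "\<forall>m\<ge>N1. absv (S m - L') < e" using LT e unfolding p_tendsto_def by blast
    obtain N2 where N2: "\<forall>m\<ge>N2. absv (S m - L) < e" using L e unfolding p_tendsto_def by blast
    define m where "m = max N1 N2"
    have "absv (L' - S m) < e" using N1 comm[of L' "S m"] unfolding m_def by simp
    moreover have "absv (S m - L) < e" using N2 unfolding m_def by simp
    ultimately have "absv ((L' - S m) + (S m - L)) < e" by (rule max_lt)
    then show False unfolding e_def by simp
  qed
  have plim: "p_lim absv S = L" unfolding p_lim_def using L uniq by (rule the_equality)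
  have fin: "absv (L - F p) \<le> absv (qnum q p)"
  proof (rule ccontr)
    assume "\<not> ?thesis"
    hence lt: "absv (qnum q p) < absv (L - F p)" by simp
    define e where "e = absv (L - F p)"
    have e: "e > 0" using lt nn[of "qnum q p"] unfolding e_def by linarith
    obtain N where N: "\<forall>m\<ge>N. absv (S m - L) < e" using L e unfolding p_tendsto_def by blast
    have "absv (L - S N) < e" using N comm[of L "S N"] by simp
    moreover have "absv (S N - F p) < e" using D1[of N] lt unfolding e_def by simp
    ultimately have "absv ((L - S N) + (S N - F p)) < e" by (rule max_lt)
    then show False unfolding e_def by simp
  qed
  have q2: "qnum q 2 \<noteq> 0"
  proof
    assume "qnum q 2 = 0"
    hence qm: "q = -1" by (simp add: qnum_def eval_nat_numeral add_eq_0_iff)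
    obtain k where k: "p = 2*k + 1" using assms(2) oddE by blast
    have "(1::'a) = of_nat p + 2 * (- of_nat k)" using k by simp
    hence "absv (1::'a) \<le> max (absv (of_nat p)) (absv (2 * (- of_nat k)))" using ultra by metis
    moreover have "absv (2 * (- of_nat k) :: 'a) \<le> absv (2::'a)"
      using mult_le[of "2::'a" "absv (2::'a)" "- of_nat k"] ofnat[of k] minus by simp
    moreover have "1 / real p < 1" using p3 by simp
    ultimately have "absv (2::'a) \<ge> 1" using absp one by linarith
    moreover have "absv (2::'a) < 1" using r1 qm unfolding r_def by simp
    ultimately show False by simp
  qed
  have "qEuler absv p p \<chi> q n = qnum q 2 / 2 * L"
    unfolding qEuler_def using plim unfolding S_def by simp
  moreover have "2 / qnum q 2 * (qnum q 2 / 2 * L) = L" using q2 by simp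
  ultimately have "2 / qnum q 2 * qEuler absv p p \<chi> q n = L" by (simp only:)
  then show "absv (2 / qnum q 2 * qEuler absv p p \<chi> q n
              - (\<Sum>a<p. \<chi> a * (-1) ^ a * qnum q a ^ n)) \<le> absv (qnum q p)"
    using fin unfolding F_def by simp
qed

end
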